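(* Let $\Sigma$ be an alphabet with $|\Sigma|\ge 3$. A function $f\colon\Sigma^*\to\Sigma^*$ is RCP if and only if there exist $n\in\mathbb{N}$ and words $w_0,\ldots,w_n\in\Sigma^*$ such that $f(x)=w_0xw_1x\cdots w_{n-1}xw_n$ for all $x\in\Sigma^*$.
   Context: $\Sigma^*$ denotes the free monoid over $\Sigma$: finite words over $\Sigma$ with concatenation, unit the empty word $\varepsilon$. A restricted congruence on $\Sigma^*$ is the kernel $\{(u,v)\mid \varphi(u)=\varphi(v)\}$ of a monoid morphism $\varphi\colon\Sigma^*\to\Sigma^*$. A function $f\colon(\Sigma^* )^k\to\Sigma^*$ is RCP if it preserves every restricted congruence, i.e. for every monoid morphism $\varphi\colon\Sigma^*\to\Sigma^*$ and all $u_1,\ldots,u_k,v_1,\ldots,v_k\in\Sigma^*$ with $\varphi(u_i)=\varphi(v_i)$ for all $i$, we have $\varphi(f(u_1,\ldots,u_k))=\varphi(f(v_1,\ldots,v_k))$. *)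

theory Defs
  imports Main
begin

definition monoid_morphism :: "('a list \<Rightarrow> 'b list) \<Rightarrow> bool" where
  "monoid_morphism \<phi> \<longleftrightarrow> \<phi> [] = [] \<and> (\<forall>u v. \<phi> (u @ v) = \<phi> u @ \<phi> v)"

definition RCP :: "('a list \<Rightarrow> 'a list) \<Rightarrow> bool" where
  "RCP f \<longleftrightarrow> (\<forall>\<phi> :: 'a list \<Rightarrow> 'a list. monoid_morphism \<phi> \<longrightarrow>
      (\<forall>u v. \<phi> u = \<phi> v \<longrightarrow> \<phi> (f u) = \<phi> (f v)))"

fun pattern :: "'a list list \<Rightarrow> 'a list \<Rightarrow> 'a list" where
  "pattern [] x = []"
| "pattern [w] x = w"
| "pattern (w # ws) x = w @ x @ pattern ws x"

end

theory Submission
  imports Defs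
begin


definition em :: "('a \<Rightarrow> 'a list) \<Rightarrow> 'a list \<Rightarrow> 'a list" where
  "em g u = concat (map g u)"

lemma em_simps[simp]: "em g [] = []" "em g (x#u) = g x @ em g u" "em g (u @ v) = em g u @ em g v"
  by (auto simp: em_def)

lemma em_morph: "monoid_morphism (em g)"
  by (simp add: monoid_morphism_def)

lemma RCP_em: "RCP f \<Longrightarrow> em g u = em g v \<Longrightarrow> em g (f u) = em g (f v)"
  unfolding RCP_def using em_morph by blast

lemma pattern_morph:
  assumes "monoid_morphism \<phi>"
  shows "\<phi> (pattern ws x) = pattern (map \<phi> ws) (\<phi> x)"
  using assms by (induction ws x rule: pattern.induct) (auto simp: monoid_morphism_def)

lemma pattern_RCP: "RCP (pattern ws)"
  unfolding RCP_def by (auto simp: pattern_morph)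

lemma pattern_Nil0: "x = [] \<Longrightarrow> pattern ws x = concat ws"
  by (induction ws x rule: pattern.induct) auto

lemma pattern_Nil: "pattern ws [] = concat ws"
  by (simp add: pattern_Nil0)

lemma pattern_cons_hd: "ws \<noteq> [] \<Longrightarrow> pattern ((d # hd ws) # tl ws) x = d # pattern ws x"
  by (cases ws; cases "tl ws") auto

lemma pattern_rep: "pattern (replicate (Suc m) []) [x] = replicate m x"
  by (induction m) (auto simp: replicate_Suc)

lemma em_erase: "em (\<lambda>y. if y = x then [] else [y]) u = filter (\<lambda>y. y \<noteq> x) u"
  by (induction u) auto

lemma em_count: "em (\<lambda>y. if y = x then [x] else []) u = replicate (count_list u x) x"
  by (induction u) auto

lemma em_count2: "x \<noteq> z \<Longrightarrow> length (em (\<lambda>y. if y = x \<or> y = z then [x] else []) u) = count_list u x + count_list u z"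
  by (induction u) auto

lemma em_map: "em (\<lambda>y. [h y]) u = map h u"
  by (induction u) auto

lemma third:
  assumes "card (UNIV::'a::finite set) \<ge> 3"
  shows "\<exists>c::'a. c \<noteq> a \<and> c \<noteq> b"
proof (rule ccontr)
  assume "\<not> ?thesis"
  then have "UNIV \<subseteq> {a,b}" by auto
  then have "card (UNIV::'a set) \<le> card {a,b}" by (simp add: card_mono)
  also have "\<dots> \<le> 2" by (simp add: card_insert_if)
  finally show False using assms by simp
qed

lemma sep:
  assumes "\<forall>s t. s \<noteq> t \<longrightarrow> (\<exists>g\<in>S. g s \<noteq> [] \<and> g t \<noteq> [] \<and> hd (g s) \<noteq> hd (g t))"
    and "\<forall>s. \<exists>g\<in>S. g s \<noteq> []"
    and "\<forall>g\<in>S. em g X = em g Y"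
  shows "X = Y"
  using assms(3)
proof (induction X arbitrary: Y)
  case Nil
  show ?case
  proof (cases Y)
    case (Cons y Y')
    from assms(2) obtain g where "g \<in> S" "g y \<noteq> []" by blast
    with Nil Cons show ?thesis by auto
  qed simp
next
  case (Cons x X')
  show ?case
  proof (cases Y)
    case Nil
    from assms(2) obtain g where "g \<in> S" "g x \<noteq> []" by blast
    with Cons.prems Nil show ?thesis by auto
  next
    case (Cons y Y')
    note Cons2 = this
    show ?thesis
    proof (cases "x = y")
      case True
      with Cons.prems Cons2 have "\<forall>g\<in>S. em g X' = em g Y'" by auto
      with Cons.IH[of Y'] True Cons2 show ?thesis by simp
    next
      case False
      with assms(1) obtain g where g: "g \<in> S" "g x \<noteq> []" "g y \<noteq> []" "hd (g x) \<noteq> hd (g y)" by blast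
      with Cons.prems Cons2 have "g x @ em g X' = g y @ em g Y'" by auto
      then have "hd (g x @ em g X') = hd (g y @ em g Y')" by simp
      with g show ?thesis by simp
    qed
  qed
qed



definition P :: "'a list \<Rightarrow> int \<Rightarrow> 'a \<Rightarrow> 'a list \<Rightarrow> bool" where
  "P w k x X \<longleftrightarrow> filter (\<lambda>y. y \<noteq> x) X = filter (\<lambda>y. y \<noteq> x) w \<and>
     int (count_list X x) = int (count_list w x) + k"

definition merges :: "('a \<Rightarrow> 'a list) \<Rightarrow> bool" where
  "merges F \<longleftrightarrow> (\<forall>a b. a \<noteq> b \<longrightarrow>
     map (\<lambda>y. if y = b then a else y) (F a) = map (\<lambda>y. if y = b then a else y) (F b))"

lemma merge_hd:
  assumes "merges F" "a \<noteq> b" "F a = a' # r" "(if a' = b then a else a') = c"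
  shows "F b \<noteq> [] \<and> (if hd (F b) = b then a else hd (F b)) = c"
proof -
  have "map (\<lambda>y. if y = b then a else y) (F a) = map (\<lambda>y. if y = b then a else y) (F b)"
    using assms(1,2) unfolding merges_def by blast
  with assms(3,4) show ?thesis by (cases "F b") auto
qed

lemma ins:
  assumes card3: "card (UNIV :: 'a::finite set) \<ge> 3"
  shows "\<forall>(w::'a list) k (F::'a \<Rightarrow> 'a list). nat (2 * int (length w) + k) = m \<longrightarrow> (\<forall>x. P w k x (F x)) \<longrightarrow> merges F \<longrightarrow>
    k \<ge> 0 \<and> (\<exists>ws. length ws = Suc (nat k) \<and> concat ws = w \<and> (\<forall>x. F x = pattern ws [x]))"
proof (induction m rule: less_induct)
  case (less m)
  show ?case
  proof (intro allI impI)
    fix w k and F :: "'a \<Rightarrow> 'a list"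
    assume m: "nat (2 * int (length w) + k) = m" and PF: "\<forall>x. P w k x (F x)" and mF: "merges F"
    have kge: "k \<ge> - int (length w)"
    proof -
      have "int (count_list (F undefined) undefined) = int (count_list w undefined) + k"
        using PF by (simp add: P_def)
      moreover have "count_list w undefined \<le> length w" by (rule count_le_length)
      ultimately show ?thesis by linarith
    qed
    show "k \<ge> 0 \<and> (\<exists>ws. length ws = Suc (nat k) \<and> concat ws = w \<and> (\<forall>x. F x = pattern ws [x]))"
    proof (cases w)
      case Nil
      have FX: "F x = replicate (nat k) x \<and> k \<ge> 0" for x
      proof -
        from PF Nil have f: "filter (\<lambda>y. y \<noteq> x) (F x) = []" and c: "int (count_list (F x) x) = k"
          by (auto simp: P_def)
        from f have "\<forall>y\<in>set (F x). y = x" by (simp add: filter_empty_conv)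
        then have "F x = replicate (length (F x)) x" by (simp add: replicate_length_same)
        moreover have "count_list (replicate n x) x = n" for n by (induction n) auto
        ultimately have "count_list (F x) x = length (F x)" by metis
        with c \<open>F x = _\<close> show ?thesis by (metis nat_int of_nat_0_le_iff)
      qed
      show ?thesis
      proof (intro conjI exI[of _ "replicate (Suc (nat k)) []"] allI)
        show "k \<ge> 0" using FX by blast
        show "length (replicate (Suc (nat k)) []) = Suc (nat k)" by simp
        show "concat (replicate (Suc (nat k)) []) = w" using Nil by simp
        fix x show "F x = pattern (replicate (Suc (nat k)) []) [x]"
          using FX[of x] pattern_rep[of "nat k" x] by simp
      qed
    next
      case (Cons d w')
      show ?thesis
      proof (cases "\<exists>a. a \<noteq> d \<and> F a \<noteq> [] \<and> hd (F a) = a")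
        case True
        then obtain a where a: "a \<noteq> d" "F a \<noteq> []" "hd (F a) = a" by blast
        then obtain ra where ra: "F a = a # ra" by (cases "F a") auto
        have Hx: "F x \<noteq> [] \<and> hd (F x) = x" if "x \<noteq> d" for x
        proof (cases "x = a")
          case True then show ?thesis using a by simp
        next
          case False
          from merge_hd[OF mF, of a x a ra a] ra False
          have ne: "F x \<noteq> []" and h: "(if hd (F x) = x then a else hd (F x)) = a" by auto
          show ?thesis
          proof (rule ccontr)
            assume "\<not> ?thesis"
            with ne h have hx: "hd (F x) = a" by (auto split: if_splits)
            then obtain r where "F x = a # r" using ne by (cases "F x") auto
            with PF[rule_format, of x] Cons False that have "a # filter (\<lambda>y. y \<noteq> x) r = d # filter (\<lambda>y. y \<noteq> x) w'"
              by (auto simp: P_def)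
            with a show False by simp
          qed
        qed
        obtain b where b: "b \<noteq> a" "b \<noteq> d" using third[OF card3] by blast
        from Hx[OF b(2)] obtain rb where rb: "F b = b # rb" by (cases "F b") auto
        have Hd: "F d \<noteq> [] \<and> hd (F d) = d"
        proof -
          from merge_hd[OF mF, of a d a ra a] ra a
          have ne: "F d \<noteq> []" and h1: "(if hd (F d) = d then a else hd (F d)) = a" by auto
          from merge_hd[OF mF, of b d b rb b] rb b
          have h2: "(if hd (F d) = d then b else hd (F d)) = b" by auto
          from h1 h2 a b ne show ?thesis by (auto split: if_splits)
        qed
        have H: "F x = x # tl (F x)" for x
          using Hx Hd by (cases "x = d") (auto, (metis list.collapse)+)
        define G where "G x = tl (F x)" for x
        have PG: "\<forall>x. P w (k - 1) x (G x)"
        proof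
          fix x
          from PF have "P w k x (x # G x)" using H unfolding G_def by metis
          then show "P w (k - 1) x (G x)" by (auto simp: P_def)
        qed
        have mG: "merges G"
          unfolding merges_def
        proof (intro allI impI)
          fix a b :: 'a assume "a \<noteq> b"
          with mF have "map (\<lambda>y. if y = b then a else y) (a # G a) = map (\<lambda>y. if y = b then a else y) (b # G b)"
            unfolding merges_def G_def using H by metis
          then show "map (\<lambda>y. if y = b then a else y) (G a) = map (\<lambda>y. if y = b then a else y) (G b)"
            using \<open>a \<noteq> b\<close> by simp
        qed
        have lt: "nat (2 * int (length w) + (k - 1)) < m" using m kge Cons by simp
        have "k - 1 \<ge> 0 \<and> (\<exists>ws. length ws = Suc (nat (k - 1)) \<and> concat ws = w \<and> (\<forall>x. G x = pattern ws [x]))"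
          using less[OF lt, THEN spec, of w, THEN spec, of "k - 1", THEN spec, of G] PG mG by blast
        then obtain ws where k1: "k - 1 \<ge> 0" and ws: "length ws = Suc (nat (k - 1))" "concat ws = w"
          "\<forall>x. G x = pattern ws [x]" by blast
        have "ws \<noteq> []" using ws by auto
        then obtain w0 r where wsr: "ws = w0 # r" by (cases ws) auto
        have "F x = pattern ([] # ws) [x]" for x
          using H[of x] ws(3) wsr unfolding G_def by (cases r) auto
        moreover have "length ([] # ws) = Suc (nat k)" using ws k1 by simp
        ultimately show ?thesis using k1 ws(2)
          by (intro conjI exI[of _ "[] # ws"]) auto
      next
        case False
        have Hx: "F x \<noteq> [] \<and> hd (F x) = d" if "x \<noteq> d" for x
        proof -
          from PF[rule_format, of x] Cons that have f: "filter (\<lambda>y. y \<noteq> x) (F x) = d # filter (\<lambda>y. y \<noteq> x) w'"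
            by (auto simp: P_def)
          then have ne: "F x \<noteq> []" by auto
          then obtain h r where hr: "F x = h # r" by (cases "F x") auto
          from False that hr have "h \<noteq> x" by auto
          with f hr show ?thesis by simp
        qed
        obtain a where a: "a \<noteq> d" using third[OF card3] by blast
        obtain b where b: "b \<noteq> a" "b \<noteq> d" using third[OF card3] by blast
        from Hx[OF a] obtain ra where ra: "F a = d # ra" by (cases "F a") auto
        from Hx[OF b(2)] obtain rb where rb: "F b = d # rb" by (cases "F b") auto
        have Hd: "F d \<noteq> [] \<and> hd (F d) = d"
        proof -
          from merge_hd[OF mF, of d a d ra d] ra a
          have ne: "F a \<noteq> []" by auto
          have m1: "map (\<lambda>y. if y = a then d else y) (F d) = map (\<lambda>y. if y = a then d else y) (F a)"
            using mF a unfolding merges_def by (metis)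
          have m2: "map (\<lambda>y. if y = b then d else y) (F d) = map (\<lambda>y. if y = b then d else y) (F b)"
            using mF b unfolding merges_def by (metis)
          from m1 ra have ne: "F d \<noteq> []" by auto
          then obtain h r where hr: "F d = h # r" by (cases "F d") auto
          from m1 m2 ra rb hr a b show ?thesis by (auto split: if_splits)
        qed
        have H: "F x = d # tl (F x)" for x
          using Hx Hd by (cases "x = d") (auto, (metis list.collapse)+)
        define G where "G x = tl (F x)" for x
        have PG: "\<forall>x. P w' k x (G x)"
        proof
          fix x
          from PF have "P (d # w') k x (d # G x)" using H Cons unfolding G_def by metis
          then show "P w' k x (G x)" by (auto simp: P_def split: if_splits)
        qed
        have mG: "merges G"
          unfolding merges_def
        proof (intro allI impI)
          fix a b :: 'a assume "a \<noteq> b"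
          with mF have "map (\<lambda>y. if y = b then a else y) (d # G a) = map (\<lambda>y. if y = b then a else y) (d # G b)"
            unfolding merges_def G_def using H by metis
          then show "map (\<lambda>y. if y = b then a else y) (G a) = map (\<lambda>y. if y = b then a else y) (G b)"
            by simp
        qed
        have lt: "nat (2 * int (length w') + k) < m" using m kge Cons by simp
        have "k \<ge> 0 \<and> (\<exists>ws. length ws = Suc (nat k) \<and> concat ws = w' \<and> (\<forall>x. G x = pattern ws [x]))"
          using less[OF lt, THEN spec, of w', THEN spec, of k, THEN spec, of G] PG mG by blast
        then obtain ws where k0: "k \<ge> 0" and ws: "length ws = Suc (nat k)" "concat ws = w'"
          "\<forall>x. G x = pattern ws [x]" by blast
        have ne: "ws \<noteq> []" using ws by auto
        have "F x = pattern ((d # hd ws) # tl ws) [x]" for x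
          using H[of x] ws(3) pattern_cons_hd[OF ne] unfolding G_def by metis
        moreover have "length ((d # hd ws) # tl ws) = Suc (nat k)" using ws ne by simp
        moreover have "concat ((d # hd ws) # tl ws) = w" using ws ne Cons
          by (cases ws) auto
        ultimately show ?thesis using k0 by blast
      qed
    qed
  qed
qed



lemma list_split2: "(\<exists>a. \<forall>y\<in>set u. y = a) \<or> (\<exists>p x y q. x \<noteq> y \<and> u = p @ x # y # q)"
proof (induction u)
  case (Cons z r)
  then show ?case
  proof
    assume "\<exists>a. \<forall>y\<in>set r. y = a"
    then obtain a where a: "\<forall>y\<in>set r. y = a" by blast
    show ?thesis
    proof (cases r)
      case Nil then show ?thesis by auto
    next
      case (Cons a' r')
      with a have "a' = a" by auto
      show ?thesis
      proof (cases "z = a")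
        case True with a show ?thesis by auto
      next
        case False
        then have "z \<noteq> a' \<and> z # r = [] @ z # a' # r'" using Cons \<open>a' = a\<close> by simp
        then show ?thesis by blast
      qed
    qed
  next
    assume "\<exists>p x y q. x \<noteq> y \<and> r = p @ x # y # q"
    then obtain p x y q where "x \<noteq> y" "r = p @ x # y # q" by blast
    then have "x \<noteq> y \<and> z # r = (z # p) @ x # y # q" by simp
    then show ?thesis by blast
  qed
qed simp

lemma em_filter_idem: "em (\<lambda>t. if t = x then [] else [t]) (filter (\<lambda>y. y \<noteq> x) u) = em (\<lambda>t. if t = x then [] else [t]) u"
  by (simp add: em_erase)

theorem mainTheorem3:
  fixes f :: "'a::finite list \<Rightarrow> 'a list"
  assumes "card (UNIV :: 'a set) \<ge> 3"
  shows "RCP f \<longleftrightarrow>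
    (\<exists>n::nat. \<exists>ws :: 'a list list. length ws = Suc n \<and> (\<forall>x. f x = pattern ws x))"
proof
  assume "\<exists>n::nat. \<exists>ws :: 'a list list. length ws = Suc n \<and> (\<forall>x. f x = pattern ws x)"
  then obtain ws :: "'a list list" where "\<forall>x. f x = pattern ws x" by blast
  then have "f = pattern ws" by auto
  then show "RCP f" using pattern_RCP by simp
next
  assume R: "RCP f"
  define w where "w = f []"
  define z :: 'a where "z = undefined"
  define k where "k = int (count_list (f [z]) z) - int (count_list w z)"
  define F where "F x = f [x]" for x
  have cnt_other: "count_list (f [x]) y = count_list w y" if "x \<noteq> y" for x y :: 'a
  proof -
    let ?g = "\<lambda>t. if t = y then [y] else []"
    have "em ?g [x] = em ?g []" using that by simp
    then have "em ?g (f [x]) = em ?g (f [])" using RCP_em[OF R] by blast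
    then show ?thesis unfolding w_def em_count by simp
  qed
  have PF: "\<forall>x. P w k x (F x)"
  proof
    fix x :: 'a
    let ?g = "\<lambda>t. if t = x then [] else [t]"
    have "em ?g [x] = em ?g []" by simp
    then have "em ?g (f [x]) = em ?g (f [])" using RCP_em[OF R] by blast
    then have fl: "filter (\<lambda>y. y \<noteq> x) (F x) = filter (\<lambda>y. y \<noteq> x) w"
      unfolding em_erase F_def w_def .
    have "int (count_list (f [x]) x) = int (count_list w x) + k"
    proof (cases "x = z")
      case True then show ?thesis unfolding k_def by simp
    next
      case False
      let ?h = "\<lambda>y. if y = x \<or> y = z then [x] else []"
      have "em ?h [x] = em ?h [z]" by simp
      then have "em ?h (f [x]) = em ?h (f [z])" using RCP_em[OF R] by blast
      then have "length (em ?h (f [x])) = length (em ?h (f [z]))" by simp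
      then have "count_list (f [x]) x + count_list (f [x]) z = count_list (f [z]) x + count_list (f [z]) z"
        unfolding em_count2[OF False] .
      moreover have "count_list (f [x]) z = count_list w z" using cnt_other False by blast
      moreover have "count_list (f [z]) x = count_list w x" using cnt_other False by metis
      ultimately show ?thesis unfolding k_def by linarith
    qed
    with fl show "P w k x (F x)" unfolding P_def F_def by simp
  qed
  have mF: "merges F"
    unfolding merges_def
  proof (intro allI impI)
    fix a b :: 'a assume "a \<noteq> b"
    let ?g = "\<lambda>y. [if y = b then a else y]"
    have "em ?g [a] = em ?g [b]" by simp
    then have "em ?g (f [a]) = em ?g (f [b])" using RCP_em[OF R] by blast
    then show "map (\<lambda>y. if y = b then a else y) (F a) = map (\<lambda>y. if y = b then a else y) (F b)"
      unfolding em_map F_def .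
  qed
  have "k \<ge> 0 \<and> (\<exists>ws. length ws = Suc (nat k) \<and> concat ws = w \<and> (\<forall>x. F x = pattern ws [x]))"
    using ins[OF assms, of "nat (2 * int (length w) + k)", THEN spec, of w, THEN spec, of k, THEN spec, of F] PF mF by blast
  then obtain ws where ws: "length ws = Suc (nat k)" "concat ws = w" "\<forall>x. f [x] = pattern ws [x]"
    unfolding F_def by blast
  define Q where "Q = pattern ws"
  have RQ: "em g (Q u) = em g (Q v)" if "em g u = em g v" for g u v
    using RCP_em[OF pattern_RCP that] unfolding Q_def .
  have "f u = Q u" for u
  proof (induction "length u" arbitrary: u rule: less_induct)
    case less
    show ?case
    proof (cases "length u \<le> 1")
      case True
      then consider "u = []" | x where "u = [x]"
        by (cases u) auto
      then show ?thesis
      proof cases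
        case 1 then show ?thesis using ws(2) unfolding Q_def w_def by (simp add: pattern_Nil)
      next
        case 2 then show ?thesis using ws(3) unfolding Q_def by simp
      qed
    next
      case False
      from list_split2[of u] show ?thesis
      proof
        assume "\<exists>a. \<forall>y\<in>set u. y = a"
        then obtain a where a: "\<forall>y\<in>set u. y = a" by blast
        define m where "m = length u"
        have um: "u = replicate m a" using a unfolding m_def by (simp add: replicate_length_same)
        have m2: "m \<ge> 2" using False unfolding m_def by simp
        obtain b where b: "b \<noteq> a" using third[OF assms] by blast
        obtain c where c: "c \<noteq> a" "c \<noteq> b" using third[OF assms] by blast
        define ga where "ga = (\<lambda>t. if t = a then [] else [t])"
        define gb where "gb = (\<lambda>t. if t = b then [a, a] else [t])"
        define gc where "gc = (\<lambda>t. if t = c then [a, a] else [t])"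
        have emrep: "em g (replicate n a) = replicate n a" if "g a = [a]" for g n
          using that by (induction n) auto
        have "em ga u = em ga []" unfolding um ga_def by (induction m) auto
        then have 1: "em ga (f u) = em ga (Q u)"
          using RCP_em[OF R] RQ unfolding w_def
          by (metis Q_def \<open>concat ws = w\<close> pattern_Nil w_def)
        obtain m' where m': "m = Suc (Suc m')" using m2 by (metis add_2_eq_Suc le_Suc_ex)
        define v where "v = b # replicate m' a"
        have lv: "length v < length u" unfolding v_def um m' by simp
        have v1: "em gb v = em gb u" unfolding v_def um m' gb_def using b
          by (simp add: emrep)
        define v' where "v' = c # replicate m' a"
        have lv': "length v' < length u" unfolding v'_def um m' by simp
        have v2: "em gc v' = em gc u" unfolding v'_def um m' gc_def using c
          by (simp add: emrep)
        have IHv: "f v = Q v" using less lv by blast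
        have IHv': "f v' = Q v'" using less lv' by blast
        have 2: "em gb (f u) = em gb (Q u)"
          using RCP_em[OF R v1] RQ[OF v1] IHv by simp
        have 3: "em gc (f u) = em gc (Q u)"
          using RCP_em[OF R v2] RQ[OF v2] IHv' by simp
        show ?thesis
        proof (rule sep[of "{ga, gb, gc}"])
          show "\<forall>s t. s \<noteq> t \<longrightarrow> (\<exists>g\<in>{ga, gb, gc}. g s \<noteq> [] \<and> g t \<noteq> [] \<and> hd (g s) \<noteq> hd (g t))"
          proof (intro allI impI)
            fix s t :: 'a assume st: "s \<noteq> t"
            show "\<exists>g\<in>{ga, gb, gc}. g s \<noteq> [] \<and> g t \<noteq> [] \<and> hd (g s) \<noteq> hd (g t)"
            proof (cases "s \<noteq> a \<and> t \<noteq> a")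
              case True then show ?thesis using st unfolding ga_def by auto
            next
              case False
              then have "(s = a \<and> t \<noteq> a) \<or> (t = a \<and> s \<noteq> a)" using st by blast
              then show ?thesis
                using b c unfolding gb_def gc_def by (cases "s = b"; cases "t = b"; auto)
            qed
          qed
          show "\<forall>s. \<exists>g\<in>{ga, gb, gc}. g s \<noteq> []" unfolding gb_def by auto
          show "\<forall>g\<in>{ga, gb, gc}. em g (f u) = em g (Q u)" using 1 2 3 by blast
        qed
      next
        assume "\<exists>p x y q. x \<noteq> y \<and> u = p @ x # y # q"
        then obtain p x y q where xy: "x \<noteq> y" and u: "u = p @ x # y # q" by blast
        obtain c where c: "c \<noteq> x" "c \<noteq> y" using third[OF assms] by blast
        define gx where "gx = (\<lambda>t. if t = x then [] else [t])"
        define gy where "gy = (\<lambda>t. if t = y then [] else [t])"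
        define g where "g = (\<lambda>t. if t = c then [x, y] else [t])"
        have er: "em h (f u) = em h (Q u)" if h: "h = (\<lambda>t. if t = e then [] else [t])" and e: "e \<in> set u" for h e
        proof -
          let ?u = "filter (\<lambda>t. t \<noteq> e) u"
          have l: "length ?u < length u" using e by (simp add: length_filter_less)
          have eq: "em h ?u = em h u" unfolding h em_erase by simp
          have "f ?u = Q ?u" using less l by blast
          then show ?thesis using RCP_em[OF R eq] RQ[OF eq] by simp
        qed
        have 1: "em gx (f u) = em gx (Q u)" using er[OF gx_def] u by simp
        have 2: "em gy (f u) = em gy (Q u)" using er[OF gy_def] u by simp
        define v where "v = p @ c # q"
        have lv: "length v < length u" unfolding v_def u by simp
        have v1: "em g v = em g u" unfolding v_def u g_def using c by simp
        have IHv: "f v = Q v" using less lv by blast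
        have 3: "em g (f u) = em g (Q u)"
          using RCP_em[OF R v1] RQ[OF v1] IHv by simp
        show ?thesis
        proof (rule sep[of "{gx, gy, g}"])
          show "\<forall>s t. s \<noteq> t \<longrightarrow> (\<exists>h\<in>{gx, gy, g}. h s \<noteq> [] \<and> h t \<noteq> [] \<and> hd (h s) \<noteq> hd (h t))"
          proof (intro allI impI)
            fix s t :: 'a assume st: "s \<noteq> t"
            show "\<exists>h\<in>{gx, gy, g}. h s \<noteq> [] \<and> h t \<noteq> [] \<and> hd (h s) \<noteq> hd (h t)"
            proof (cases "s \<noteq> x \<and> t \<noteq> x")
              case True then show ?thesis using st unfolding gx_def by auto
            next
              case F1: False
              show ?thesis
              proof (cases "s \<noteq> y \<and> t \<noteq> y")
                case True then show ?thesis using st unfolding gy_def by auto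
              next
                case False
                with F1 st have "g s = [s] \<and> g t = [t]" using c xy unfolding g_def by auto
                then show ?thesis using st by auto
              qed
            qed
          qed
          show "\<forall>s. \<exists>h\<in>{gx, gy, g}. h s \<noteq> []" unfolding gx_def gy_def using xy by auto
          show "\<forall>h\<in>{gx, gy, g}. em h (f u) = em h (Q u)" using 1 2 3 by blast
        qed
      qed
    qed
  qed
  then show "\<exists>n::nat. \<exists>ws :: 'a list list. length ws = Suc n \<and> (\<forall>x. f x = pattern ws x)"
    using ws(1) unfolding Q_def by blast
qed


end
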